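(* Let $K=\operatorname{cone}\{e_1,\dots,e_m\}\subset\mathbb{R}^m$ be a simplicial cone and $L$ a proper cone such that $K$ is an $L$-isotone projection set. Then there exists an index set $I\subset\{1,\dots,m\}$, with complement $I^c$, such that $\langle e_i,e_j\rangle\ge0$ for all $i,j\in I$, $\langle e_k,e_\ell\rangle\ge0$ for all $k,\ell\in I^c$, and $\langle e_i,e_k\rangle\le0$ for all $i\in I$, $k\in I^c$.
   Context: $\mathbb{R}^m$ carries the standard inner product. A simplicial cone is $\operatorname{cone}\{e_1,\dots,e_m\}=\{\sum t^ie_i:t^i\ge0\}$ with $e_1,\dots,e_m$ linearly independent. A proper cone is a closed convex cone $L$ that is pointed ($L\cap(-L)=\{0\}$) and generating ($L-L=\mathbb{R}^m$). $x\le_L y$ means $y-x\in L$. $K$ is an $L$-isotone projection set if $x\le_L y$ implies $P_Kx\le_L P_Ky$, where $P_K$ is the metric projection onto $K$. *)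

theory Defs
  imports "HOL-Analysis.Analysis"
begin

definition simplicial_cone :: "('n::finite \<Rightarrow> real^'n) \<Rightarrow> (real^'n) set" where
  "simplicial_cone e = {(\<Sum>i\<in>UNIV. t i *\<^sub>R e i) | t. \<forall>i. 0 \<le> t i}"

definition lin_indep_family :: "('n::finite \<Rightarrow> real^'n) \<Rightarrow> bool" where
  "lin_indep_family e \<longleftrightarrow> (\<forall>c. (\<Sum>i\<in>UNIV. c i *\<^sub>R e i) = 0 \<longrightarrow> (\<forall>i. c i = 0))"

definition proper_cone :: "(real^'n) set \<Rightarrow> bool" where
  "proper_cone L \<longleftrightarrow> closed L \<and> convex_cone L \<and> L \<inter> uminus ` L = {0}
     \<and> {x - y | x y. x \<in> L \<and> y \<in> L} = UNIV"

definition cone_le :: "(real^'n) set \<Rightarrow> real^'n \<Rightarrow> real^'n \<Rightarrow> bool" where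
  "cone_le L x y \<longleftrightarrow> y - x \<in> L"

definition isotone_projection_set :: "(real^'n) set \<Rightarrow> (real^'n) set \<Rightarrow> bool" where
  "isotone_projection_set L K \<longleftrightarrow>
     (\<forall>x y. cone_le L x y \<longrightarrow> cone_le L (closest_point K x) (closest_point K y))"

end

theory Submission
  imports Defs
begin

lemma closest_point_char:
  fixes S :: "(real^'n) set"
  assumes p: "p \<in> S" and v: "\<forall>y\<in>S. (a - p) \<bullet> (y - p) \<le> 0"
  shows "closest_point S a = p"
proof -
  have key: "dist a q ^ 2 \<ge> dist a p ^ 2 + dist p q ^ 2" if "q \<in> S" for q
  proof -
    have "(a - p) \<bullet> (q - p) \<le> 0" using v that by blast
    moreover have "a - q = (a - p) - (q - p)" by simp
    hence "(a - q) \<bullet> (a - q) = (a-p)\<bullet>(a-p) - 2 * ((a-p)\<bullet>(q-p)) + (q-p)\<bullet>(q-p)"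
      by (simp add: inner_diff_left inner_diff_right inner_commute)
    moreover have "dist a q ^ 2 = (a-q)\<bullet>(a-q)" by (simp add: dist_norm power2_norm_eq_inner)
    moreover have "dist a p ^ 2 = (a-p)\<bullet>(a-p)" by (simp add: dist_norm power2_norm_eq_inner)
    moreover have "dist p q ^ 2 = (q-p)\<bullet>(q-p)"
      by (metis dist_commute dist_norm power2_norm_eq_inner)
    ultimately show ?thesis by linarith
  qed
  have P: "p \<in> S \<and> (\<forall>y\<in>S. dist a p \<le> dist a y)"
  proof (intro conjI ballI p)
    fix y assume "y \<in> S"
    from key[OF this] have "dist a p ^ 2 \<le> dist a y ^ 2"
      using zero_le_power2[of "dist p y"] by linarith
    thus "dist a p \<le> dist a y" by (rule power2_le_imp_le) simp
  qed
  define q where "q = closest_point S a"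
  have q: "q \<in> S \<and> (\<forall>y\<in>S. dist a q \<le> dist a y)"
    unfolding q_def closest_point_def by (rule someI[of _ p], rule P)
  have "dist a q \<le> dist a p" using q P by blast
  hence "dist a q ^ 2 \<le> dist a p ^ 2" by (simp add: power_mono)
  with key[of q] q have "dist p q ^ 2 \<le> 0" by linarith
  hence "p = q" by simp
  thus ?thesis by (simp add: q_def)
qed

lemma proj_ray:
  fixes e :: "'n::finite \<Rightarrow> real^'n"
  assumes c: "c \<ge> 0" and wi: "w \<bullet> e i = 0" and wj: "\<forall>j. w \<bullet> e j \<le> 0"
  shows "closest_point (simplicial_cone e) (c *\<^sub>R e i + w) = c *\<^sub>R e i"
proof (rule closest_point_char)
  show "c *\<^sub>R e i \<in> simplicial_cone e"
    unfolding simplicial_cone_def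
  proof (intro CollectI exI conjI)
    show "c *\<^sub>R e i = (\<Sum>j\<in>UNIV. (if j = i then c else 0) *\<^sub>R e j)"
      by (simp add: if_distrib[of "\<lambda>s. s *\<^sub>R _"] sum.delta cong: if_cong)
    show "\<forall>j. 0 \<le> (if j = i then c else 0)" using c by simp
  qed
  show "\<forall>y\<in>simplicial_cone e. (c *\<^sub>R e i + w - c *\<^sub>R e i) \<bullet> (y - c *\<^sub>R e i) \<le> 0"
  proof
    fix y assume "y \<in> simplicial_cone e"
    then obtain t where y: "y = (\<Sum>j\<in>UNIV. t j *\<^sub>R e j)" and t: "\<forall>j. 0 \<le> t j"
      unfolding simplicial_cone_def by blast
    have "w \<bullet> y = (\<Sum>j\<in>UNIV. t j * (w \<bullet> e j))"
      by (simp add: y inner_sum_right)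
    also have "\<dots> \<le> 0"
      by (rule sum_nonpos) (simp add: t wj mult_nonneg_nonpos)
    finally show "(c *\<^sub>R e i + w - c *\<^sub>R e i) \<bullet> (y - c *\<^sub>R e i) \<le> 0"
      by (simp add: inner_diff_right wi)
  qed
qed

lemma dual_exists:
  fixes e :: "'n::finite \<Rightarrow> real^'n"
  assumes li: "lin_indep_family e"
  shows "\<exists>x. \<forall>j. x \<bullet> e j = b $ j"
proof -
  define g where "g = (\<lambda>c::real^'n. \<Sum>i\<in>UNIV. c $ i *\<^sub>R e i)"
  define h where "h = (\<lambda>x::real^'n. \<chi> j. x \<bullet> e j)"
  have lg: "linear g" unfolding g_def
    by (rule linearI) (simp_all add: scaleR_add_left sum.distrib scaleR_sum_right)
  have "inj g"
    unfolding linear_injective_0[OF lg] proof (intro allI impI)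
    fix c assume "g c = 0"
    hence "\<forall>i. c $ i = 0" using li unfolding lin_indep_family_def g_def by blast
    thus "c = 0" by (simp add: vec_eq_iff)
  qed
  hence sg: "surj g" using lg eucl.linear_inj_imp_surj by blast
  have lh: "linear h" unfolding h_def
    by (rule linearI) (auto simp: vec_eq_iff inner_add_left)
  have "inj h"
    unfolding linear_injective_0[OF lh] proof (intro allI impI)
    fix x assume hx: "h x = 0"
    obtain c where "x = g c" using sg by (metis surjD)
    have "x \<bullet> x = (\<Sum>i\<in>UNIV. c $ i * (x \<bullet> e i))"
      by (subst (2) \<open>x = g c\<close>) (simp add: g_def inner_sum_right)
    also have "\<dots> = 0" using hx by (simp add: h_def vec_eq_iff)
    finally show "x = 0" by simp
  qed
  hence "surj h" using lh eucl.linear_inj_imp_surj by blast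
  then obtain x where "b = h x" by (metis surjD)
  thus ?thesis by (auto simp: h_def)
qed

lemma key_in_L:
  fixes e :: "'n::finite \<Rightarrow> real^'n" and L :: "(real^'n) set"
  assumes li: "lin_indep_family e"
    and pc: "proper_cone L"
    and iso: "isotone_projection_set L (simplicial_cone e)"
    and l: "l \<in> L"
  shows "(l \<bullet> e i) *\<^sub>R e i \<in> L"
proof -
  have conic: "conic L" using pc by (simp add: proper_cone_def convex_cone_def)
  have ei0: "e i \<noteq> 0"
  proof
    assume "e i = 0"
    have "(\<Sum>j\<in>UNIV. (if j = i then 1 else 0) *\<^sub>R e j) = 0"
      using \<open>e i = 0\<close> by (simp add: if_distrib[of "\<lambda>s. s *\<^sub>R _"] sum.delta cong: if_cong)
    thus False using li[unfolded lin_indep_family_def, rule_format, of "\<lambda>j. if j = i then 1 else (0::real)" i] by simp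
  qed
  hence nn: "e i \<bullet> e i > 0" by simp
  obtain n where n: "\<forall>j. n \<bullet> e j = (\<chi> j. if j = i then 0 else -1) $ j"
    using dual_exists[OF li] by blast
  define a where "a = (l \<bullet> e i) / (e i \<bullet> e i)"
  define r where "r = l - a *\<^sub>R e i"
  have ri: "r \<bullet> e i = 0" using nn by (simp add: r_def a_def inner_diff_left)
  define S where "S = (\<Sum>j\<in>UNIV. \<bar>r \<bullet> e j\<bar>)"
  have S0: "S \<ge> 0" unfolding S_def by (simp add: sum_nonneg)
  define eps where "eps = 1 / (1 + \<bar>a\<bar> + S)"
  have eps0: "eps > 0" using S0 by (simp add: eps_def)
  have epsb: "eps * (1 + \<bar>a\<bar> + S) = 1" using S0 by (simp add: eps_def)
  have rj: "\<bar>r \<bullet> e j\<bar> \<le> S" for j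
    unfolding S_def by (rule member_le_sum) auto
  have split: "eps * (1 + \<bar>a\<bar> + S) = eps + eps * \<bar>a\<bar> + eps * S"
    by (simp add: algebra_simps)
  have eS0: "eps * S \<ge> 0" using eps0 S0 by simp
  have ea0: "eps * \<bar>a\<bar> \<ge> 0" using eps0 by simp
  have eaS: "eps * \<bar>a\<bar> \<le> 1" "eps * S \<le> 1" using split epsb eps0 eS0 ea0 by linarith+
  have c0: "1 + eps * a \<ge> 0"
  proof -
    have "eps * (- \<bar>a\<bar>) \<le> eps * a" using eps0 by (intro mult_left_mono) auto
    thus ?thesis using eaS by simp
  qed
  have w2: "\<forall>j. (n + eps *\<^sub>R r) \<bullet> e j \<le> 0"
  proof
    fix j
    have "r \<bullet> e j \<le> S" using rj[of j] by linarith
    hence "eps * (r \<bullet> e j) \<le> eps * S" using eps0 by (intro mult_left_mono) auto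
    hence le1: "eps * (r \<bullet> e j) \<le> 1" using eaS by linarith
    show "(n + eps *\<^sub>R r) \<bullet> e j \<le> 0"
    proof (cases "j = i")
      case True thus ?thesis using n ri by (simp add: inner_add_left)
    next
      case False thus ?thesis using n le1 by (simp add: inner_add_left)
    qed
  qed
  have P1: "closest_point (simplicial_cone e) (1 *\<^sub>R e i + n) = 1 *\<^sub>R e i"
    by (rule proj_ray) (use n in auto)
  have P2: "closest_point (simplicial_cone e) ((1 + eps * a) *\<^sub>R e i + (n + eps *\<^sub>R r))
      = (1 + eps * a) *\<^sub>R e i"
    by (rule proj_ray[OF c0]) (use n ri w2 in \<open>auto simp: inner_add_left\<close>)
  have yx: "(1 + eps * a) *\<^sub>R e i + (n + eps *\<^sub>R r) - (1 *\<^sub>R e i + n) = eps *\<^sub>R l"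
    by (simp add: r_def algebra_simps)
  have "cone_le L (1 *\<^sub>R e i + n) ((1 + eps * a) *\<^sub>R e i + (n + eps *\<^sub>R r))"
    unfolding cone_le_def yx using conic l eps0 by (simp add: conic_def)
  hence "(1 + eps * a) *\<^sub>R e i - 1 *\<^sub>R e i \<in> L"
  proof -
    have "cone_le L (closest_point (simplicial_cone e) (1 *\<^sub>R e i + n))
       (closest_point (simplicial_cone e) ((1 + eps * a) *\<^sub>R e i + (n + eps *\<^sub>R r)))"
      using iso \<open>cone_le L _ _\<close> unfolding isotone_projection_set_def by blast
    thus ?thesis unfolding P1 P2 cone_le_def .
  qed
  moreover have "(1 + eps * a) *\<^sub>R e i - 1 *\<^sub>R e i = (eps * a) *\<^sub>R e i"
    by (simp add: scaleR_add_left)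
  ultimately have "(eps * a) *\<^sub>R e i \<in> L" by simp
  moreover have "(e i \<bullet> e i) / eps \<ge> 0" using eps0 nn by simp
  ultimately have "((e i \<bullet> e i) / eps) *\<^sub>R ((eps * a) *\<^sub>R e i) \<in> L"
    using conic unfolding conic_def by blast
  moreover have "((e i \<bullet> e i) / eps) *\<^sub>R ((eps * a) *\<^sub>R e i) = (l \<bullet> e i) *\<^sub>R e i"
    using eps0 nn by (simp add: a_def)
  ultimately show ?thesis by metis
qed

theorem proposition3:
  fixes e :: "'n::finite \<Rightarrow> real^'n" and L :: "(real^'n) set"
  assumes "lin_indep_family e"
    and "proper_cone L"
    and "isotone_projection_set L (simplicial_cone e)"
  shows "\<exists>I::'n set.
           (\<forall>i\<in>I. \<forall>j\<in>I. e i \<bullet> e j \<ge> 0) \<and>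
           (\<forall>k\<in>-I. \<forall>l\<in>-I. e k \<bullet> e l \<ge> 0) \<and>
           (\<forall>i\<in>I. \<forall>k\<in>-I. e i \<bullet> e k \<le> 0)"
proof -
  note K = key_in_L[OF assms]
  have conic: "conic L" using assms(2) by (simp add: proper_cone_def convex_cone_def)
  have pointed: "x \<in> L \<Longrightarrow> -x \<in> L \<Longrightarrow> x = 0" for x
  proof -
    assume "x \<in> L" "-x \<in> L"
    hence "x \<in> L \<inter> uminus ` L" by (metis IntI image_eqI minus_minus)
    thus "x = 0" using assms(2) unfolding proper_cone_def by blast
  qed
  have ei0: "e i \<noteq> 0" for i
  proof
    assume "e i = 0"
    have "(\<Sum>j\<in>UNIV. (if j = i then 1 else 0) *\<^sub>R e j) = 0"
      using \<open>e i = 0\<close> by (simp add: if_distrib[of "\<lambda>s. s *\<^sub>R _"] sum.delta cong: if_cong)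
    thus False using assms(1)[unfolded lin_indep_family_def, rule_format, of "\<lambda>j. if j = i then 1 else (0::real)" i] by simp
  qed
  have scale: "s *\<^sub>R e i \<in> L \<Longrightarrow> s > 0 \<Longrightarrow> e i \<in> L"
    and scale2: "s *\<^sub>R e i \<in> L \<Longrightarrow> s < 0 \<Longrightarrow> - e i \<in> L" for s i
  proof -
    assume "s *\<^sub>R e i \<in> L" "s > 0"
    hence "(1/s) *\<^sub>R (s *\<^sub>R e i) \<in> L"
      using conic[unfolded conic_def, rule_format, of "s *\<^sub>R e i" "1/s"] by simp
    thus "e i \<in> L" using \<open>s > 0\<close> by simp
  next
    assume "s *\<^sub>R e i \<in> L" "s < 0"
    hence "(-1/s) *\<^sub>R (s *\<^sub>R e i) \<in> L"
      using conic[unfolded conic_def, rule_format, of "s *\<^sub>R e i" "-1/s"] by simp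
    thus "- e i \<in> L" using \<open>s < 0\<close> by simp
  qed
  have pos: "e i \<in> L \<Longrightarrow> l \<in> L \<Longrightarrow> l \<bullet> e i \<ge> 0" for i l
  proof (rule ccontr)
    assume "e i \<in> L" "l \<in> L" "\<not> l \<bullet> e i \<ge> 0"
    hence "- e i \<in> L" using scale2 K by (meson not_le)
    thus False using pointed \<open>e i \<in> L\<close> ei0 by blast
  qed
  have neg: "- e i \<in> L \<Longrightarrow> l \<in> L \<Longrightarrow> l \<bullet> e i \<le> 0" for i l
  proof (rule ccontr)
    assume "- e i \<in> L" "l \<in> L" "\<not> l \<bullet> e i \<le> 0"
    hence "e i \<in> L" using scale K by (meson not_le)
    thus False using pointed \<open>- e i \<in> L\<close> ei0 by blast
  qed
  have dich: "e i \<in> L \<or> - e i \<in> L" for i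
  proof (rule ccontr)
    assume nd: "\<not> (e i \<in> L \<or> - e i \<in> L)"
    have z: "l \<bullet> e i = 0" if "l \<in> L" for l
      using K[OF that, of i] scale scale2 nd by (metis linorder_neqE_linordered_idom)
    have "e i \<in> {x - y | x y. x \<in> L \<and> y \<in> L}" using assms(2) by (simp add: proper_cone_def)
    then obtain x y where "e i = x - y" "x \<in> L" "y \<in> L" by blast
    hence "e i \<bullet> e i = 0" using z by (simp add: inner_diff_left)
    thus False using ei0 by simp
  qed
  show ?thesis
  proof (intro exI[of _ "{i. e i \<in> L}"] conjI ballI)
    fix i j assume "i \<in> {i. e i \<in> L}" "j \<in> {i. e i \<in> L}"
    thus "e i \<bullet> e j \<ge> 0" using pos by simp
  next
    fix k l assume "k \<in> - {i. e i \<in> L}" "l \<in> - {i. e i \<in> L}"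
    hence "- e k \<in> L" "- e l \<in> L" using dich by auto
    hence "(- e k) \<bullet> e l \<le> 0" using neg by blast
    thus "e k \<bullet> e l \<ge> 0" by simp
  next
    fix i k assume "i \<in> {i. e i \<in> L}" "k \<in> - {i. e i \<in> L}"
    hence "e i \<in> L" "- e k \<in> L" using dich by auto
    hence "(- e k) \<bullet> e i \<ge> 0" using pos by blast
    thus "e i \<bullet> e k \<le> 0" by (simp add: inner_commute)
  qed
qed

end
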